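(* Let $T_1,T_2>0$, $0<\tau<2\min(T_1,T_2)$, $\gamma>0$, and let $R_1=\tau/\sqrt2$, $R_2=R_1+\tau$, $c_0=(T_1+\tau/2+R_1,\,T_2+\tau/2+R_1)$. Define the regions of $\mathbb{R}^2$ (for $p=(p_1,p_2)$): $S_{1,\alpha}=\{T_1+\tfrac\tau2<p_1<T_1+\tfrac\tau2+R_1,\ T_2+\tfrac\tau2<p_2<T_2+\tfrac\tau2+R_1,\ \|p-c_0\|<R_1\}$, $S_{1,1}=\{T_1+\tfrac\tau2<p_1<T_1+\tfrac\tau2+R_1,\ p_2>T_2+\tfrac\tau2+R_1\}$, $S_{1,2}=\{T_2+\tfrac\tau2<p_2<T_2+\tfrac\tau2+R_1,\ p_1>T_1+\tfrac\tau2+R_1\}$, $S_{1,3}=\{p_1>T_1+\tfrac\tau2+R_1,\ p_2>T_2+\tfrac\tau2+R_1\}$, $S_{0,\alpha}=\{p_1\le T_1+\tfrac\tau2+R_1,\ p_2\le T_2+\tfrac\tau2+R_1,\ \|p-c_0\|>R_2\}$, $S_{0,1}=\{p_1\le T_1-\tfrac\tau2,\ p_2>T_2+\tfrac\tau2+R_1\}$, $S_{0,2}=\{p_2\le T_2-\tfrac\tau2,\ p_1>T_1+\tfrac\tau2+R_1\}$, $S_{\tau,\alpha}=\{p_1\le T_1+\tfrac\tau2+R_1,\ p_2\le T_2+\tfrac\tau2+R_1,\ R_1\le\|p-c_0\|\le R_2\}$, $S_{\tau,1}=\{T_1-\tfrac\tau2\le p_1\le T_1+\tfrac\tau2,\ p_2>T_2+\tfrac\tau2+R_1\}$,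 $S_{\tau,2}=\{T_2-\tfrac\tau2\le p_2\le T_2+\tfrac\tau2,\ p_1>T_1+\tfrac\tau2+R_1\}$, and $f_\tau=1$ on $S_{1,\alpha}\cup S_{1,1}\cup S_{1,2}\cup S_{1,3}$, $f_\tau=0$ on $S_{0,\alpha}\cup S_{0,1}\cup S_{0,2}$, $f_\tau(p)=\frac{R_2-\|p-c_0\|}{\tau}$ on $S_{\tau,\alpha}$, $f_\tau(p)=\frac{p_1-(T_1-\tau/2)}{\tau}$ on $S_{\tau,1}$, $f_\tau(p)=\frac{p_2-(T_2-\tau/2)}{\tau}$ on $S_{\tau,2}$. Let $g_E(x,x')=e^{\gamma\|x-x'\|}$ and let $B^*(z)=\sup_{w}\frac{\mathrm{L}_{f_\tau,\infty}(w)}{g_E(z,w)}$ be the $g_E$-smooth sensitivity of $f_\tau$. Then for $z=(z_1,z_2)$: $B^*(z)=\max\left(\frac{1}{T_1+\tau/2-z_1},\frac1\tau e^{-\gamma(T_1-\tau/2-z_1)}\right)$ for $z\in S_{0,1}$; $B^*(z)=\max\left(\frac{1}{T_2+\tau/2-z_2},\frac1\tau e^{-\gamma(T_2-\tau/2-z_2)}\right)$ for $z\in S_{0,2}$; $B^*(z)=\max\left(\frac{1}{\|z-c_0\|-R_1},\frac1\tau e^{-\gamma(\|z-c_0\|-R_2)}\right)$ for $z\in S_{0,\alpha}$; $B^*(z)=\max\left(\frac{1}{z_1-(T_1-\tau/2)},\frac1\tau e^{-\gamma(z_1-(T_1+\tau/2))}\right)$ for $z\in S_{1,1}$; $B^*(z)=\max\left(\frac{1}{z_2-(T_2-\tau/2)},\frac1\tau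 e^{-\gamma(z_2-(T_2+\tau/2))}\right)$ for $z\in S_{1,2}$; $B^*(z)=\max\left(\frac{1}{z_1-(T_1-\tau/2)},\frac1\tau e^{-\gamma(z_1-(T_1+\tau/2))},\frac{1}{z_2-(T_2-\tau/2)},\frac1\tau e^{-\gamma(z_2-(T_2+\tau/2))}\right)$ for $z\in S_{1,3}$; $B^*(z)=\max\left(\frac{1}{R_2-\|z-c_0\|},\frac1\tau e^{-\gamma(R_1-\|z-c_0\|)}\right)$ for $z\in S_{1,\alpha}$; $B^*(z)=\frac1\tau$ for $z\in S_{\tau,1}\cup S_{\tau,2}\cup S_{\tau,\alpha}$.
   Context: $\|\cdot\|$ is the Euclidean norm. $\mathrm{L}_{f,\infty}(w)$ is the infimum of all $K$ such that $|f(w)-f(w')|\le K\|w-w'\|$ for all $w'$ in the domain of $f$; the supremum defining $B^*$ ranges over the domain of $f_\tau$ (the union of the regions above). *)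

theory Defs
  imports "HOL-Analysis.Analysis"
begin

text \<open>Points of the plane are pairs of reals; the norm on real \<times> real is the Euclidean norm.\<close>

definition R1 :: "real \<Rightarrow> real" where "R1 \<tau> = \<tau> / sqrt 2"
definition R2 :: "real \<Rightarrow> real" where "R2 \<tau> = R1 \<tau> + \<tau>"
definition c0 :: "real \<Rightarrow> real \<Rightarrow> real \<Rightarrow> real \<times> real" where
  "c0 T1 T2 \<tau> = (T1 + \<tau>/2 + R1 \<tau>, T2 + \<tau>/2 + R1 \<tau>)"

definition S1a :: "real \<Rightarrow> real \<Rightarrow> real \<Rightarrow> (real \<times> real) set" where
  "S1a T1 T2 \<tau> = {p. T1 + \<tau>/2 < fst p \<and> fst p < T1 + \<tau>/2 + R1 \<tau> \<and>
                     T2 + \<tau>/2 < snd p \<and> snd p < T2 + \<tau>/2 + R1 \<tau> \<and>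
                     norm (p - c0 T1 T2 \<tau>) < R1 \<tau>}"
definition S11 :: "real \<Rightarrow> real \<Rightarrow> real \<Rightarrow> (real \<times> real) set" where
  "S11 T1 T2 \<tau> = {p. T1 + \<tau>/2 < fst p \<and> fst p < T1 + \<tau>/2 + R1 \<tau> \<and> snd p > T2 + \<tau>/2 + R1 \<tau>}"
definition S12 :: "real \<Rightarrow> real \<Rightarrow> real \<Rightarrow> (real \<times> real) set" where
  "S12 T1 T2 \<tau> = {p. T2 + \<tau>/2 < snd p \<and> snd p < T2 + \<tau>/2 + R1 \<tau> \<and> fst p > T1 + \<tau>/2 + R1 \<tau>}"
definition S13 :: "real \<Rightarrow> real \<Rightarrow> real \<Rightarrow> (real \<times> real) set" where
  "S13 T1 T2 \<tau> = {p. fst p > T1 + \<tau>/2 + R1 \<tau> \<and> snd p > T2 + \<tau>/2 + R1 \<tau>}"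
definition S0a :: "real \<Rightarrow> real \<Rightarrow> real \<Rightarrow> (real \<times> real) set" where
  "S0a T1 T2 \<tau> = {p. fst p \<le> T1 + \<tau>/2 + R1 \<tau> \<and> snd p \<le> T2 + \<tau>/2 + R1 \<tau> \<and>
                     norm (p - c0 T1 T2 \<tau>) > R2 \<tau>}"
definition S01 :: "real \<Rightarrow> real \<Rightarrow> real \<Rightarrow> (real \<times> real) set" where
  "S01 T1 T2 \<tau> = {p. fst p \<le> T1 - \<tau>/2 \<and> snd p > T2 + \<tau>/2 + R1 \<tau>}"
definition S02 :: "real \<Rightarrow> real \<Rightarrow> real \<Rightarrow> (real \<times> real) set" where
  "S02 T1 T2 \<tau> = {p. snd p \<le> T2 - \<tau>/2 \<and> fst p > T1 + \<tau>/2 + R1 \<tau>}"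
definition Sta :: "real \<Rightarrow> real \<Rightarrow> real \<Rightarrow> (real \<times> real) set" where
  "Sta T1 T2 \<tau> = {p. fst p \<le> T1 + \<tau>/2 + R1 \<tau> \<and> snd p \<le> T2 + \<tau>/2 + R1 \<tau> \<and>
                     R1 \<tau> \<le> norm (p - c0 T1 T2 \<tau>) \<and> norm (p - c0 T1 T2 \<tau>) \<le> R2 \<tau>}"
definition St1 :: "real \<Rightarrow> real \<Rightarrow> real \<Rightarrow> (real \<times> real) set" where
  "St1 T1 T2 \<tau> = {p. T1 - \<tau>/2 \<le> fst p \<and> fst p \<le> T1 + \<tau>/2 \<and> snd p > T2 + \<tau>/2 + R1 \<tau>}"
definition St2 :: "real \<Rightarrow> real \<Rightarrow> real \<Rightarrow> (real \<times> real) set" where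
  "St2 T1 T2 \<tau> = {p. T2 - \<tau>/2 \<le> snd p \<and> snd p \<le> T2 + \<tau>/2 \<and> fst p > T1 + \<tau>/2 + R1 \<tau>}"

definition dom_f :: "real \<Rightarrow> real \<Rightarrow> real \<Rightarrow> (real \<times> real) set" where
  "dom_f T1 T2 \<tau> = S1a T1 T2 \<tau> \<union> S11 T1 T2 \<tau> \<union> S12 T1 T2 \<tau> \<union> S13 T1 T2 \<tau>
     \<union> S0a T1 T2 \<tau> \<union> S01 T1 T2 \<tau> \<union> S02 T1 T2 \<tau>
     \<union> Sta T1 T2 \<tau> \<union> St1 T1 T2 \<tau> \<union> St2 T1 T2 \<tau>"

text \<open>f_tau (values outside its domain are irrelevant and set to 0).\<close>
definition f_tau :: "real \<Rightarrow> real \<Rightarrow> real \<Rightarrow> real \<times> real \<Rightarrow> real" where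
  "f_tau T1 T2 \<tau> p =
    (if p \<in> S1a T1 T2 \<tau> \<union> S11 T1 T2 \<tau> \<union> S12 T1 T2 \<tau> \<union> S13 T1 T2 \<tau> then 1
     else if p \<in> S0a T1 T2 \<tau> \<union> S01 T1 T2 \<tau> \<union> S02 T1 T2 \<tau> then 0
     else if p \<in> Sta T1 T2 \<tau> then (R2 \<tau> - norm (p - c0 T1 T2 \<tau>)) / \<tau>
     else if p \<in> St1 T1 T2 \<tau> then (fst p - (T1 - \<tau>/2)) / \<tau>
     else if p \<in> St2 T1 T2 \<tau> then (snd p - (T2 - \<tau>/2)) / \<tau>
     else 0)"

text \<open>Local Lipschitz constant of f at w relative to domain D, as an extended real
  (infimum over the empty set is +\<infinity>).\<close>
definition local_lip :: "('a::real_normed_vector \<Rightarrow> real) \<Rightarrow> 'a set \<Rightarrow> 'a \<Rightarrow> ereal" where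
  "local_lip f D w = Inf {ereal K | K. \<forall>w'\<in>D. \<bar>f w - f w'\<bar> \<le> K * norm (w - w')}"

definition g_E :: "real \<Rightarrow> 'a::real_normed_vector \<Rightarrow> 'a \<Rightarrow> real" where
  "g_E \<gamma> x x' = exp (\<gamma> * norm (x - x'))"

definition smooth_sens :: "('a::real_normed_vector \<Rightarrow> real) \<Rightarrow> 'a set \<Rightarrow> ('a \<Rightarrow> 'a \<Rightarrow> real) \<Rightarrow> 'a \<Rightarrow> ereal" where
  "smooth_sens f D g z = (SUP w\<in>D. local_lip f D w / ereal (g z w))"

end

theory Submission
  imports Defs
begin


definition gg :: "real \<Rightarrow> real \<Rightarrow> real" where
  "gg a b = (if a \<le> 0 \<and> b \<le> 0 then max a b else sqrt ((max a 0)\<^sup>2 + (max b 0)\<^sup>2))"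

lemma sq1: "\<bar>x::real\<bar> \<le> sqrt (x\<^sup>2 + y\<^sup>2)"
  by (metis real_sqrt_abs real_sqrt_le_mono le_add_same_cancel1 zero_le_power2)
lemma sq2: "\<bar>y::real\<bar> \<le> sqrt (x\<^sup>2 + y\<^sup>2)"
  by (metis real_sqrt_abs real_sqrt_le_mono le_add_same_cancel2 zero_le_power2)

lemma gg_mixed:
  assumes "a \<le> 0" "b \<le> 0" "\<not> (c \<le> 0 \<and> d \<le> 0)"
  shows "gg c d - gg a b \<le> sqrt ((a-c)\<^sup>2 + (b-d)\<^sup>2)"
proof -
  define m where "m = - max a b"
  have m: "m \<ge> 0" "-a \<ge> m" "-b \<ge> m" using assms by (auto simp: m_def)
  have ga: "gg a b = - m" using assms by (simp add: gg_def m_def)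
  show ?thesis
  proof (cases "c \<le> 0")
    case True
    then have "d > 0" using assms by auto
    then have "gg c d = d" using True by (simp add: gg_def max_def)
    moreover have "d + m \<le> \<bar>b - d\<bar>" using m \<open>d>0\<close> by linarith
    ultimately show ?thesis using ga sq2[where x="a-c" and y="b-d"] by linarith
  next
    case c: False
    show ?thesis
    proof (cases "d \<le> 0")
      case True
      then have "gg c d = c" using c by (simp add: gg_def max_def)
      moreover have "c + m \<le> \<bar>a - c\<bar>" using m c by linarith
      ultimately show ?thesis using ga sq1[where x="a-c" and y="b-d"] by linarith
    next
      case d: False
      define s where "s = sqrt (c\<^sup>2 + d\<^sup>2)"
      have gc: "gg c d = s" using c d by (simp add: gg_def s_def max_def)
      have s0: "s \<ge> 0" and ss: "s\<^sup>2 = c\<^sup>2 + d\<^sup>2" by (auto simp: s_def)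
      have "c\<^sup>2 + d\<^sup>2 \<le> (c+d)\<^sup>2" proof -
        have "0 \<le> c*d" using c d by simp
        then show ?thesis by (simp add: power2_sum)
      qed
      then have "sqrt (c\<^sup>2 + d\<^sup>2) \<le> sqrt ((c+d)\<^sup>2)" by (rule real_sqrt_le_mono)
      then have "s \<le> c + d" using c d by (simp add: s_def)
      then have "m * s \<le> m * (c + d)" using m by (intro mult_left_mono) auto
      then have "(s + m)\<^sup>2 \<le> (c+m)\<^sup>2 + (d+m)\<^sup>2" using ss m
        by (simp add: power2_sum algebra_simps) (use zero_le_power2[of m] in linarith)
      then have "s + m \<le> sqrt ((c+m)\<^sup>2 + (d+m)\<^sup>2)" by (rule real_le_rsqrt)
      also have "\<dots> \<le> sqrt ((a-c)\<^sup>2 + (b-d)\<^sup>2)"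
        using m c d by (intro real_sqrt_le_mono add_mono; simp only: power2_commute[of a] power2_commute[of b]; intro power_mono; simp)
      finally show ?thesis using gc ga by simp
    qed
  qed
qed

lemma gg_lip: "\<bar>gg a b - gg c d\<bar> \<le> sqrt ((a-c)\<^sup>2 + (b-d)\<^sup>2)"
proof (cases "a \<le> 0 \<and> b \<le> 0"; cases "c \<le> 0 \<and> d \<le> 0")
  assume 1: "a \<le> 0 \<and> b \<le> 0" and 2: "c \<le> 0 \<and> d \<le> 0"
  have "\<bar>max a b - max c d\<bar> \<le> max \<bar>a-c\<bar> \<bar>b-d\<bar>" by (simp add: max_def abs_if)
  also have "\<dots> \<le> sqrt ((a-c)\<^sup>2 + (b-d)\<^sup>2)" using sq1 sq2 by simp
  finally show ?thesis using 1 2 by (simp add: gg_def)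
next
  assume 1: "a \<le> 0 \<and> b \<le> 0" and 2: "\<not>(c \<le> 0 \<and> d \<le> 0)"
  have "gg a b \<le> 0" using 1 by (simp add: gg_def)
  moreover have "gg c d \<ge> 0" using 2 unfolding gg_def by auto
  ultimately show ?thesis using gg_mixed[of a b c d] 1 2 by simp
next
  assume 1: "\<not>(a \<le> 0 \<and> b \<le> 0)" and 2: "c \<le> 0 \<and> d \<le> 0"
  have "gg c d \<le> 0" using 2 by (simp add: gg_def)
  moreover have "gg a b \<ge> 0" using 1 unfolding gg_def by auto
  moreover have "sqrt ((c-a)\<^sup>2 + (d-b)\<^sup>2) = sqrt ((a-c)\<^sup>2 + (b-d)\<^sup>2)"
    by (simp add: power2_commute)
  ultimately show ?thesis using gg_mixed[of c d a b] 1 2 by simp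
next
  assume 1: "\<not>(a \<le> 0 \<and> b \<le> 0)" and 2: "\<not>(c \<le> 0 \<and> d \<le> 0)"
  define A where "A = max a 0" define B where "B = max b 0"
  define C where "C = max c 0" define D where "D = max d 0"
  have g: "gg a b = sqrt (A\<^sup>2 + B\<^sup>2)" "gg c d = sqrt (C\<^sup>2 + D\<^sup>2)"
    using 1 2 by (auto simp: gg_def A_def B_def C_def D_def)
  have t1: "sqrt (A\<^sup>2 + B\<^sup>2) \<le> sqrt ((A-C)\<^sup>2 + (B-D)\<^sup>2) + sqrt (C\<^sup>2 + D\<^sup>2)"
    using real_sqrt_sum_squares_triangle_ineq[of "A-C" C "B-D" D] by simp
  have t2: "sqrt (C\<^sup>2 + D\<^sup>2) \<le> sqrt ((A-C)\<^sup>2 + (B-D)\<^sup>2) + sqrt (A\<^sup>2 + B\<^sup>2)"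
    using real_sqrt_sum_squares_triangle_ineq[of "C-A" A "D-B" B] by (simp add: power2_commute)
  have "(A-C)\<^sup>2 \<le> (a-c)\<^sup>2" unfolding abs_le_square_iff[symmetric] A_def C_def by (simp add: max_def abs_if)
  moreover have "(B-D)\<^sup>2 \<le> (b-d)\<^sup>2" unfolding abs_le_square_iff[symmetric] B_def D_def by (simp add: max_def abs_if)
  ultimately have "sqrt ((A-C)\<^sup>2 + (B-D)\<^sup>2) \<le> sqrt ((a-c)\<^sup>2 + (b-d)\<^sup>2)" by simp
  then show ?thesis using t1 t2 g by linarith
qed

lemma exp_mediant:
  fixes a b u c :: real
  assumes "0 < a" "a \<le> u" "u \<le> b"
  shows "exp (c*u) / u \<le> max (exp (c*a) / a) (exp (c*b) / b)"
proof (cases "a = b")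
  case True then show ?thesis using assms by simp
next
  case False
  then have ab: "a < b" using assms by simp
  define l where "l = (b - u) / (b - a)"
  have l: "0 \<le> l" "l \<le> 1" using assms ab by (auto simp: l_def field_simps)
  have lb: "l*(b-a) = b-u" using ab by (simp add: l_def)
  have "l * a + (1 - l) * b = b - l*(b-a)" by (simp add: algebra_simps)
  then have u: "u = l * a + (1 - l) * b" using lb by simp
  have "exp (c*u) = exp (l * (c*a) + (1 - l) * (c*b))" by (simp add: u algebra_simps)
  also have "\<dots> \<le> l * exp (c*a) + (1 - l) * exp (c*b)"
    using convex_onD[OF exp_convex, of "1-l" "c*a" "c*b"] l by simp
  finally have e: "exp (c*u) \<le> l * exp (c*a) + (1 - l) * exp (c*b)" .
  define M where "M = max (exp (c*a) / a) (exp (c*b) / b)"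
  have "exp (c*a) / a \<le> M" "exp (c*b) / b \<le> M" unfolding M_def by auto
  then have "exp (c*a) \<le> M * a" "exp (c*b) \<le> M * b" using assms by (simp_all add: pos_divide_le_eq)
  then have "l * exp (c*a) + (1 - l) * exp (c*b) \<le> l * (M * a) + (1 - l) * (M * b)"
    using l by (intro add_mono mult_left_mono) auto
  also have "\<dots> = M * u" by (simp add: u algebra_simps)
  finally have "exp (c*u) \<le> M * u" using e by linarith
  then have "exp (c*u) / u \<le> M" using assms by (simp add: pos_divide_le_eq)
  then show ?thesis unfolding M_def .
qed



definition hh :: "real \<Rightarrow> real \<Rightarrow> real \<Rightarrow> real" where
  "hh r t s = max 0 (min 1 ((r + t - s) / t))"
definition ph :: "real \<Rightarrow> real \<Rightarrow> real \<Rightarrow> real" where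
  "ph r t s = (if r + t \<le> s then 1 / (s - r) else if r \<le> s then 1 / t else 1 / (r + t - s))"
definition cl :: "real \<Rightarrow> real \<Rightarrow> real \<Rightarrow> real" where
  "cl r t s = max r (min (r + t) s)"
definition Ph :: "real \<Rightarrow> real \<Rightarrow> real \<Rightarrow> real \<Rightarrow> real" where
  "Ph r t g s = max (ph r t s) (exp (- g * \<bar>s - cl r t s\<bar>) / t)"

lemma aux1:
  fixes x y t :: real
  assumes "0 \<le> x" "t \<le> y" "0 < t"
  shows "(t - x) / t \<le> (y - x) / y"
proof -
  have "x / y \<le> x / t" using assms by (intro divide_left_mono) auto
  moreover have "(t - x) / t = 1 - x / t" "(y - x) / y = 1 - x / y" using assms by (auto simp: field_simps)
  ultimately show ?thesis by simp
qed

lemma aux2: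
  fixes x y t :: real
  assumes "0 \<le> x" "x \<le> t" "0 < t" "0 \<le> y"
  shows "x / t \<le> (x + y) / (t + y)"
proof -
  have "x * y \<le> t * y" using assms by (intro mult_right_mono) auto
  then have "x * (t + y) \<le> (x + y) * t" by (simp add: algebra_simps)
  then show ?thesis using assms by (simp add: divide_simps)
qed

lemma clamp_lip: "\<bar>max 0 (min 1 u) - max 0 (min 1 v)\<bar> \<le> \<bar>u - v :: real\<bar>"
  by (simp add: max_def min_def abs_if)

context
  fixes r t :: real
  assumes r: "0 < r" and t: "0 < t"
begin

lemma hh_lo: "s \<le> r \<Longrightarrow> hh r t s = 1"
  using t by (simp add: hh_def field_simps)
lemma hh_hi: "r + t \<le> s \<Longrightarrow> hh r t s = 0"
  using t by (simp add: hh_def field_simps)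
lemma hh_mid: "r \<le> s \<Longrightarrow> s \<le> r + t \<Longrightarrow> hh r t s = (r + t - s) / t"
  using t by (simp add: hh_def field_simps)

lemma ph_pos: "ph r t s > 0"
  using r t by (auto simp: ph_def)
lemma ph_le: "ph r t s \<le> 1 / t"
  using r t by (auto simp: ph_def divide_simps)

lemma hh_lip: "\<bar>hh r t s - hh r t u\<bar> \<le> ph r t s * \<bar>s - u\<bar>"
proof -
  consider "r + t \<le> s" | "r \<le> s" "s < r + t" | "s < r" by linarith
  then show ?thesis
  proof cases
    case 1
    then have p: "ph r t s = 1 / (s - r)" and h: "hh r t s = 0" by (auto simp: ph_def hh_hi)
    have sr: "s - r > 0" using 1 t by linarith
    consider "s \<le> u" | "u \<le> r" | "r < u" "u < r + t" | "r + t \<le> u" "u < s" by linarith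
    then show ?thesis
    proof cases
      case 1 then show ?thesis using h hh_hi[of u] \<open>r + t \<le> s\<close> ph_pos[of s] by simp
    next
      case 2
      then have "1 \<le> (s - u) / (s - r)" using sr by (simp add: divide_simps)
      then show ?thesis using 2 h p hh_lo[of u] sr by (simp add: abs_if)
    next
      case 3
      have "(t - (u - r)) / t \<le> ((s - r) - (u - r)) / (s - r)"
        using 3 \<open>r + t \<le> s\<close> t by (intro aux1) auto
      then show ?thesis using 3 h p hh_mid[of u] \<open>r + t \<le> s\<close> by (simp add: abs_if algebra_simps)
    next
      case 4 then show ?thesis using h hh_hi[of u] ph_pos[of s] by simp
    qed
  next
    case 2
    then have p: "ph r t s = 1 / t" by (auto simp: ph_def)
    have "\<bar>hh r t s - hh r t u\<bar> \<le> \<bar>(r + t - s) / t - (r + t - u) / t\<bar>"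
      unfolding hh_def by (rule clamp_lip)
    also have "\<dots> = \<bar>(u - s) / t\<bar>" by (simp add: diff_divide_distrib[symmetric])
    also have "\<dots> = \<bar>s - u\<bar> / t" using t by (simp add: abs_minus_commute)
    finally show ?thesis using p by simp
  next
    case 3
    then have p: "ph r t s = 1 / (r + t - s)" and h: "hh r t s = 1" using t by (auto simp: ph_def hh_lo)
    have sr: "r + t - s > 0" using 3 t by linarith
    consider "u \<le> r" | "r < u" "u < r + t" | "r + t \<le> u" by linarith
    then show ?thesis
    proof cases
      case 1 then show ?thesis using h hh_lo[of u] ph_pos[of s] by simp
    next
      case 2
      have "(u - r) / t \<le> ((u - r) + (r - s)) / (t + (r - s))"
        using 2 3 t by (intro aux2) auto
      moreover have "1 - hh r t u = (u - r) / t" using hh_mid[of u] 2 t by (simp add: field_simps)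
      moreover have "((u - r) + (r - s)) / (t + (r - s)) = (u - s) / (r + t - s)"
        by (rule arg_cong2[where f="(/)"]) auto
      moreover have "(u - r) / t \<ge> 0" using 2 t by simp
      ultimately have "1 - hh r t u \<le> (u - s) / (r + t - s)" by linarith
      moreover have "(u - s) / (r + t - s) = ph r t s * \<bar>s - u\<bar>" using p 2 3 by simp
      ultimately show ?thesis using \<open>1 - hh r t u = (u - r) / t\<close> \<open>(u - r) / t \<ge> 0\<close> h by simp
    next
      case 3
      then have "1 \<le> (u - s) / (r + t - s)" using sr by (simp add: divide_simps)
      then show ?thesis using 3 \<open>s < r\<close> h p hh_hi[of u] t by (simp add: abs_if)
    qed
  qed
qed

lemma exp_le1: "0 \<le> (g::real) \<Longrightarrow> 0 \<le> x \<Longrightarrow> exp (- g * x) \<le> 1"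
  using mult_nonneg_nonneg[of g x] by simp

lemma exp_anti: "0 \<le> (g::real) \<Longrightarrow> x \<le> (y::real) \<Longrightarrow> exp (- g * y) \<le> exp (- g * x)"
  by (simp add: mult_left_mono)

lemma mediant_scaled:
  fixes a u b c :: real
  assumes "0 < a" "a \<le> u" "u \<le> b"
  shows "exp (- c * (b - u)) / u \<le> max (exp (- c * (b - a)) / a) (1 / b)"
proof -
  have m: "exp (c*u) / u \<le> max (exp (c*a) / a) (exp (c*b) / b)" by (rule exp_mediant[OF assms])
  have k: "exp (- c * b) > 0" by simp
  have e1: "exp (- c * (b - u)) / u = exp (- c * b) * (exp (c*u) / u)"
    by (simp add: exp_add[symmetric] algebra_simps)
  have e2: "exp (- c * (b - a)) / a = exp (- c * b) * (exp (c*a) / a)"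
    by (simp add: exp_add[symmetric] algebra_simps)
  have e3: "1 / b = exp (- c * b) * (exp (c*b) / b)"
    by (simp add: exp_add[symmetric] algebra_simps exp_minus field_simps)
  from m consider "exp (c*u) / u \<le> exp (c*a) / a" | "exp (c*u) / u \<le> exp (c*b) / b"
    by (auto simp: le_max_iff_disj)
  then show ?thesis
  proof cases
    case 1
    then have "exp (- c * b) * (exp (c*u) / u) \<le> exp (- c * b) * (exp (c*a) / a)"
      using k by (intro mult_left_mono) auto
    then have "exp (- c * (b - u)) / u \<le> exp (- c * (b - a)) / a" by (simp only: e1 e2)
    then show ?thesis by (rule max.coboundedI1)
  next
    case 2
    then have "exp (- c * b) * (exp (c*u) / u) \<le> exp (- c * b) * (exp (c*b) / b)"
      using k by (intro mult_left_mono) auto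
    then have "exp (- c * (b - u)) / u \<le> 1 / b" by (simp only: e1 e3)
    then show ?thesis by (rule max.coboundedI2)
  qed
qed

lemma Ph_bound:
  assumes g: "0 \<le> g"
  shows "ph r t s * exp (- g * \<bar>v - s\<bar>) \<le> Ph r t g v"
proof -
  have php: "ph r t s > 0" by (rule ph_pos)
  have phl: "ph r t s \<le> 1 / t" by (rule ph_le)
  consider "r + t \<le> v" | "r \<le> v" "v < r + t" | "v < r" by linarith
  then show ?thesis
  proof cases
    case 1
    then have P: "Ph r t g v = max (1 / (v - r)) (exp (- g * (v - (r + t))) / t)"
      using t by (simp add: Ph_def ph_def cl_def)
    consider "v \<le> s" | "r + t \<le> s" "s \<le> v" | "s \<le> r + t" by linarith
    then show ?thesis
    proof cases
      case 1
      then have "ph r t s \<le> 1 / (v - r)" using \<open>r + t \<le> v\<close> t r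
        by (simp add: ph_def divide_simps)
      moreover have "exp (- g * \<bar>v - s\<bar>) \<le> 1" using g by (intro exp_le1) auto
      ultimately have "ph r t s * exp (- g * \<bar>v - s\<bar>) \<le> 1 / (v - r) * 1"
        using php \<open>r + t \<le> v\<close> t by (intro mult_mono) auto
      then show ?thesis using P by simp
    next
      case 2
      have "exp (- g * ((v - r) - (s - r))) / (s - r) \<le> max (exp (- g * ((v - r) - t)) / t) (1 / (v - r))"
        using 2 t by (intro mediant_scaled) auto
      moreover have "ph r t s * exp (- g * \<bar>v - s\<bar>) = exp (- g * ((v - r) - (s - r))) / (s - r)"
        using 2 by (simp add: ph_def)
      ultimately show ?thesis using P by (simp add: algebra_simps max.commute)
    next
      case 3
      have "exp (- g * \<bar>v - s\<bar>) \<le> exp (- g * (v - (r + t)))" using 3 1 g by (intro exp_anti) auto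
      then have "ph r t s * exp (- g * \<bar>v - s\<bar>) \<le> 1 / t * exp (- g * (v - (r + t)))"
        using php phl t by (intro mult_mono) auto
      then show ?thesis using P by simp
    qed
  next
    case 2
    then have P: "Ph r t g v \<ge> 1 / t" by (simp add: Ph_def cl_def)
    have "exp (- g * \<bar>v - s\<bar>) \<le> 1" using g by (intro exp_le1) auto
    then have "ph r t s * exp (- g * \<bar>v - s\<bar>) \<le> 1 / t * 1"
      using php phl t by (intro mult_mono) auto
    then show ?thesis using P by simp
  next
    case 3
    then have P: "Ph r t g v = max (1 / (r + t - v)) (exp (- g * (r - v)) / t)"
      using t by (simp add: Ph_def ph_def cl_def)
    consider "s \<le> v" | "v \<le> s" "s \<le> r" | "r \<le> s" by linarith
    then show ?thesis
    proof cases
      case 1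
      then have "ph r t s \<le> 1 / (r + t - v)" using 3 t r
        by (simp add: ph_def divide_simps)
      moreover have "exp (- g * \<bar>v - s\<bar>) \<le> 1" using g by (intro exp_le1) auto
      ultimately have "ph r t s * exp (- g * \<bar>v - s\<bar>) \<le> 1 / (r + t - v) * 1"
        using php 3 t by (intro mult_mono) auto
      then show ?thesis using P by simp
    next
      case 2
      have "exp (- g * ((r + t - v) - (r + t - s))) / (r + t - s) \<le> max (exp (- g * ((r + t - v) - t)) / t) (1 / (r + t - v))"
        using 2 t by (intro mediant_scaled) auto
      moreover have "ph r t s * exp (- g * \<bar>v - s\<bar>) = exp (- g * ((r + t - v) - (r + t - s))) / (r + t - s)"
        using 2 t by (simp add: ph_def)
      ultimately show ?thesis using P by (simp add: algebra_simps max.commute)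
    next
      case 4: 3
      have "exp (- g * \<bar>v - s\<bar>) \<le> exp (- g * (r - v))" using 3 4 g by (intro exp_anti) auto
      then have "ph r t s * exp (- g * \<bar>v - s\<bar>) \<le> 1 / t * exp (- g * (r - v))"
        using php phl t by (intro mult_mono) auto
      then show ?thesis using P by simp
    qed
  qed
qed

end


definition sg :: "real \<Rightarrow> real \<Rightarrow> real \<Rightarrow> real \<times> real \<Rightarrow> real" where
  "sg T1 T2 \<tau> p = gg (fst (c0 T1 T2 \<tau>) - fst p) (snd (c0 T1 T2 \<tau>) - snd p)"

lemma norm_pair_real: "norm ((a::real), (b::real)) = sqrt (a\<^sup>2 + b\<^sup>2)"
  by (simp add: norm_Pair)

context
  fixes T1 T2 \<tau> :: real
  assumes tau: "0 < \<tau>"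
begin

lemma r_pos: "0 < R1 \<tau>"
  using tau by (simp add: R1_def)

lemma R2_eq: "R2 \<tau> = R1 \<tau> + \<tau>"
  by (simp add: R2_def)

lemma c0_eq: "fst (c0 T1 T2 \<tau>) = T1 + \<tau>/2 + R1 \<tau>" "snd (c0 T1 T2 \<tau>) = T2 + \<tau>/2 + R1 \<tau>"
  by (simp_all add: c0_def)

lemma sg_lip: "\<bar>sg T1 T2 \<tau> p - sg T1 T2 \<tau> q\<bar> \<le> norm (p - q)"
proof -
  obtain p1 p2 where p: "p = (p1, p2)" by (cases p)
  obtain q1 q2 where q: "q = (q1, q2)" by (cases q)
  let ?X = "fst (c0 T1 T2 \<tau>)" and ?Y = "snd (c0 T1 T2 \<tau>)"
  have "\<bar>sg T1 T2 \<tau> p - sg T1 T2 \<tau> q\<bar> \<le> sqrt (((?X - p1) - (?X - q1))\<^sup>2 + ((?Y - p2) - (?Y - q2))\<^sup>2)"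
    unfolding sg_def p q fst_conv snd_conv by (rule gg_lip)
  also have "\<dots> = norm (p - q)" by (simp add: p q norm_pair_real power2_commute)
  finally show ?thesis .
qed

lemma sg_a: "fst p < fst (c0 T1 T2 \<tau>) \<Longrightarrow> snd (c0 T1 T2 \<tau>) \<le> snd p \<Longrightarrow> sg T1 T2 \<tau> p = fst (c0 T1 T2 \<tau>) - fst p"
  by (simp add: sg_def gg_def max_def)
lemma sg_b: "snd p < snd (c0 T1 T2 \<tau>) \<Longrightarrow> fst (c0 T1 T2 \<tau>) \<le> fst p \<Longrightarrow> sg T1 T2 \<tau> p = snd (c0 T1 T2 \<tau>) - snd p"
  by (simp add: sg_def gg_def max_def)
lemma sg_c: "fst p \<le> fst (c0 T1 T2 \<tau>) \<Longrightarrow> snd p \<le> snd (c0 T1 T2 \<tau>) \<Longrightarrow> sg T1 T2 \<tau> p = norm (p - c0 T1 T2 \<tau>)"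
proof -
  assume a: "fst p \<le> fst (c0 T1 T2 \<tau>)" "snd p \<le> snd (c0 T1 T2 \<tau>)"
  have n: "norm (p - c0 T1 T2 \<tau>) = sqrt ((fst (c0 T1 T2 \<tau>) - fst p)\<^sup>2 + (snd (c0 T1 T2 \<tau>) - snd p)\<^sup>2)"
    by (cases p; cases "c0 T1 T2 \<tau>") (simp add: norm_pair_real power2_commute)
  show ?thesis
  proof (cases "fst p = fst (c0 T1 T2 \<tau>) \<and> snd p = snd (c0 T1 T2 \<tau>)")
    case True then show ?thesis using n by (simp add: sg_def gg_def)
  next
    case False then show ?thesis using n a by (auto simp add: sg_def gg_def max_def)
  qed
qed
lemma sg_d: "fst (c0 T1 T2 \<tau>) \<le> fst p \<Longrightarrow> snd (c0 T1 T2 \<tau>) \<le> snd p \<Longrightarrow>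
   sg T1 T2 \<tau> p = max (fst (c0 T1 T2 \<tau>) - fst p) (snd (c0 T1 T2 \<tau>) - snd p)"
  by (simp add: sg_def gg_def)

lemma sg_S1a: "p \<in> S1a T1 T2 \<tau> \<Longrightarrow> sg T1 T2 \<tau> p < R1 \<tau>"
proof -
  assume "p \<in> S1a T1 T2 \<tau>"
  then have a: "fst p \<le> fst (c0 T1 T2 \<tau>)" "snd p \<le> snd (c0 T1 T2 \<tau>)" "norm (p - c0 T1 T2 \<tau>) < R1 \<tau>"
    unfolding S1a_def c0_eq by auto
  then show ?thesis using sg_c[OF a(1,2)] by simp
qed
lemma sg_S11: "p \<in> S11 T1 T2 \<tau> \<Longrightarrow> sg T1 T2 \<tau> p < R1 \<tau>"
proof -
  assume "p \<in> S11 T1 T2 \<tau>"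
  then have a: "fst p < fst (c0 T1 T2 \<tau>)" "snd (c0 T1 T2 \<tau>) \<le> snd p" "fst (c0 T1 T2 \<tau>) - fst p < R1 \<tau>"
    unfolding S11_def c0_eq by auto
  then show ?thesis using sg_a[OF a(1,2)] by simp
qed
lemma sg_S12: "p \<in> S12 T1 T2 \<tau> \<Longrightarrow> sg T1 T2 \<tau> p < R1 \<tau>"
proof -
  assume "p \<in> S12 T1 T2 \<tau>"
  then have a: "snd p < snd (c0 T1 T2 \<tau>)" "fst (c0 T1 T2 \<tau>) \<le> fst p" "snd (c0 T1 T2 \<tau>) - snd p < R1 \<tau>"
    unfolding S12_def c0_eq by auto
  then show ?thesis using sg_b[OF a(1,2)] by simp
qed
lemma sg_S13: "p \<in> S13 T1 T2 \<tau> \<Longrightarrow> sg T1 T2 \<tau> p < R1 \<tau>"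
proof -
  assume "p \<in> S13 T1 T2 \<tau>"
  then have a: "fst (c0 T1 T2 \<tau>) \<le> fst p" "snd (c0 T1 T2 \<tau>) \<le> snd p" "fst (c0 T1 T2 \<tau>) < fst p" "snd (c0 T1 T2 \<tau>) < snd p"
    unfolding S13_def c0_eq by auto
  then show ?thesis using sg_d[OF a(1,2)] r_pos by simp
qed
lemma sg_S0a: "p \<in> S0a T1 T2 \<tau> \<Longrightarrow> R1 \<tau> + \<tau> < sg T1 T2 \<tau> p"
proof -
  assume "p \<in> S0a T1 T2 \<tau>"
  then have a: "fst p \<le> fst (c0 T1 T2 \<tau>)" "snd p \<le> snd (c0 T1 T2 \<tau>)" "R1 \<tau> + \<tau> < norm (p - c0 T1 T2 \<tau>)"
    unfolding S0a_def c0_eq R2_eq by auto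
  then show ?thesis using sg_c[OF a(1,2)] by simp
qed
lemma sg_S01: "p \<in> S01 T1 T2 \<tau> \<Longrightarrow> R1 \<tau> + \<tau> \<le> sg T1 T2 \<tau> p"
proof -
  assume "p \<in> S01 T1 T2 \<tau>"
  then have a: "fst p < fst (c0 T1 T2 \<tau>)" "snd (c0 T1 T2 \<tau>) \<le> snd p" "R1 \<tau> + \<tau> \<le> fst (c0 T1 T2 \<tau>) - fst p"
    using r_pos tau unfolding S01_def c0_eq by auto
  then show ?thesis using sg_a[OF a(1,2)] by simp
qed
lemma sg_S02: "p \<in> S02 T1 T2 \<tau> \<Longrightarrow> R1 \<tau> + \<tau> \<le> sg T1 T2 \<tau> p"
proof -
  assume "p \<in> S02 T1 T2 \<tau>"
  then have a: "snd p < snd (c0 T1 T2 \<tau>)" "fst (c0 T1 T2 \<tau>) \<le> fst p" "R1 \<tau> + \<tau> \<le> snd (c0 T1 T2 \<tau>) - snd p"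
    using r_pos tau unfolding S02_def c0_eq by auto
  then show ?thesis using sg_b[OF a(1,2)] by simp
qed
lemma sg_Sta: "p \<in> Sta T1 T2 \<tau> \<Longrightarrow> sg T1 T2 \<tau> p = norm (p - c0 T1 T2 \<tau>) \<and>
    R1 \<tau> \<le> sg T1 T2 \<tau> p \<and> sg T1 T2 \<tau> p \<le> R1 \<tau> + \<tau>"
proof -
  assume "p \<in> Sta T1 T2 \<tau>"
  then have a: "fst p \<le> fst (c0 T1 T2 \<tau>)" "snd p \<le> snd (c0 T1 T2 \<tau>)" "R1 \<tau> \<le> norm (p - c0 T1 T2 \<tau>)"
     "norm (p - c0 T1 T2 \<tau>) \<le> R1 \<tau> + \<tau>"
    unfolding Sta_def c0_eq R2_eq by auto
  then show ?thesis using sg_c[OF a(1,2)] by simp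
qed
lemma sg_St1: "p \<in> St1 T1 T2 \<tau> \<Longrightarrow> sg T1 T2 \<tau> p = T1 + \<tau>/2 + R1 \<tau> - fst p \<and>
    R1 \<tau> \<le> sg T1 T2 \<tau> p \<and> sg T1 T2 \<tau> p \<le> R1 \<tau> + \<tau>"
proof -
  assume "p \<in> St1 T1 T2 \<tau>"
  then have a: "fst p < fst (c0 T1 T2 \<tau>)" "snd (c0 T1 T2 \<tau>) \<le> snd p" "T1 - \<tau>/2 \<le> fst p" "fst p \<le> T1 + \<tau>/2"
    using r_pos unfolding St1_def c0_eq by auto
  then show ?thesis using sg_a[OF a(1,2)] unfolding c0_eq by simp
qed
lemma sg_St2: "p \<in> St2 T1 T2 \<tau> \<Longrightarrow> sg T1 T2 \<tau> p = T2 + \<tau>/2 + R1 \<tau> - snd p \<and>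
    R1 \<tau> \<le> sg T1 T2 \<tau> p \<and> sg T1 T2 \<tau> p \<le> R1 \<tau> + \<tau>"
proof -
  assume "p \<in> St2 T1 T2 \<tau>"
  then have a: "snd p < snd (c0 T1 T2 \<tau>)" "fst (c0 T1 T2 \<tau>) \<le> fst p" "T2 - \<tau>/2 \<le> snd p" "snd p \<le> T2 + \<tau>/2"
    using r_pos unfolding St2_def c0_eq by auto
  then show ?thesis using sg_b[OF a(1,2)] unfolding c0_eq by simp
qed

lemma f_eq:
  assumes "p \<in> dom_f T1 T2 \<tau>"
  shows "f_tau T1 T2 \<tau> p = hh (R1 \<tau>) \<tau> (sg T1 T2 \<tau> p)"
proof -
  note H = hh_lo[OF r_pos tau] hh_hi[OF r_pos tau] hh_mid[OF r_pos tau]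
  show ?thesis
  proof (cases "p \<in> S1a T1 T2 \<tau> \<union> S11 T1 T2 \<tau> \<union> S12 T1 T2 \<tau> \<union> S13 T1 T2 \<tau>")
    case True
    then have "sg T1 T2 \<tau> p < R1 \<tau>" using sg_S1a sg_S11 sg_S12 sg_S13 by blast
    moreover have "f_tau T1 T2 \<tau> p = 1" unfolding f_tau_def using True by (rule if_P)
    ultimately show ?thesis using H(1) by simp
  next
    case n1: False
    show ?thesis
    proof (cases "p \<in> S0a T1 T2 \<tau> \<union> S01 T1 T2 \<tau> \<union> S02 T1 T2 \<tau>")
      case True
      have "R1 \<tau> + \<tau> \<le> sg T1 T2 \<tau> p" using True
      proof (elim UnE)
        assume "p \<in> S0a T1 T2 \<tau>" then show ?thesis using sg_S0a[of p] by linarith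
      next
        assume "p \<in> S01 T1 T2 \<tau>" then show ?thesis using sg_S01[of p] by linarith
      next
        assume "p \<in> S02 T1 T2 \<tau>" then show ?thesis using sg_S02[of p] by linarith
      qed
      moreover have "f_tau T1 T2 \<tau> p = 0" unfolding f_tau_def
        by (subst if_not_P[OF n1], rule if_P[OF True])
      ultimately show ?thesis using H(2) by simp
    next
      case n2: False
      show ?thesis
      proof (cases "p \<in> Sta T1 T2 \<tau>")
        case True
        have "f_tau T1 T2 \<tau> p = (R2 \<tau> - norm (p - c0 T1 T2 \<tau>)) / \<tau>" unfolding f_tau_def
          by (subst if_not_P[OF n1], subst if_not_P[OF n2], rule if_P[OF True])
        then show ?thesis using H(3) sg_Sta[OF True] by (simp add: R2_eq)
      next
        case n3: False
        show ?thesis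
        proof (cases "p \<in> St1 T1 T2 \<tau>")
          case True
          have "f_tau T1 T2 \<tau> p = (fst p - (T1 - \<tau>/2)) / \<tau>" unfolding f_tau_def
            by (subst if_not_P[OF n1], subst if_not_P[OF n2], subst if_not_P[OF n3], rule if_P[OF True])
          moreover have "R1 \<tau> + \<tau> - (T1 + \<tau>/2 + R1 \<tau> - fst p) = fst p - (T1 - \<tau>/2)" by simp
          ultimately show ?thesis using H(3) sg_St1[OF True] by simp
        next
          case n4: False
          then have T: "p \<in> St2 T1 T2 \<tau>" using n1 n2 n3 assms unfolding dom_f_def by blast
          have "f_tau T1 T2 \<tau> p = (snd p - (T2 - \<tau>/2)) / \<tau>" unfolding f_tau_def
            by (subst if_not_P[OF n1], subst if_not_P[OF n2], subst if_not_P[OF n3], subst if_not_P[OF n4], rule if_P[OF T])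
          moreover have "R1 \<tau> + \<tau> - (T2 + \<tau>/2 + R1 \<tau> - snd p) = snd p - (T2 - \<tau>/2)" by simp
          ultimately show ?thesis using H(3) sg_St2[OF T] by simp
        qed
      qed
    qed
  qed
qed

end


context
  fixes T1 T2 \<tau> :: real
  assumes tau: "0 < \<tau>"
begin

abbreviation "XX \<equiv> fst (c0 T1 T2 \<tau>)"
abbreviation "YY \<equiv> snd (c0 T1 T2 \<tau>)"

lemma c0_not_in: "c0 T1 T2 \<tau> \<notin> dom_f T1 T2 \<tau>"
  using r_pos[OF tau] tau unfolding dom_f_def S1a_def S11_def S12_def S13_def S0a_def S01_def S02_def
    Sta_def St1_def St2_def by (auto simp: c0_eq[OF tau] R2_eq[OF tau])

lemma dom_cases:
  assumes "p \<in> dom_f T1 T2 \<tau>"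
  shows "(fst p < XX \<and> YY < snd p) \<or> (XX < fst p \<and> snd p < YY) \<or>
         (fst p \<le> XX \<and> snd p \<le> YY \<and> p \<noteq> c0 T1 T2 \<tau>) \<or> (XX < fst p \<and> YY < snd p)"
proof -
  have "p \<noteq> c0 T1 T2 \<tau>" using assms c0_not_in by auto
  moreover have "(fst p < XX \<and> YY < snd p) \<or> (XX < fst p \<and> snd p < YY) \<or>
         (fst p \<le> XX \<and> snd p \<le> YY) \<or> (XX < fst p \<and> YY < snd p)"
    using assms r_pos[OF tau] tau unfolding dom_f_def S1a_def S11_def S12_def S13_def S0a_def S01_def S02_def
    Sta_def St1_def St2_def c0_eq[OF tau] by auto
  ultimately show ?thesis by blast
qed

lemma in_St1: "R1 \<tau> \<le> s \<Longrightarrow> s \<le> R1 \<tau> + \<tau> \<Longrightarrow> YY < b \<Longrightarrow> (XX - s, b) \<in> St1 T1 T2 \<tau>"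
  unfolding St1_def c0_eq[OF tau] by auto
lemma in_St2: "R1 \<tau> \<le> s \<Longrightarrow> s \<le> R1 \<tau> + \<tau> \<Longrightarrow> XX < b \<Longrightarrow> (b, YY - s) \<in> St2 T1 T2 \<tau>"
  unfolding St2_def c0_eq[OF tau] by auto

lemma normal_pt:
  assumes p: "p \<in> dom_f T1 T2 \<tau>" and s: "R1 \<tau> \<le> s" "s \<le> R1 \<tau> + \<tau>"
  shows "\<exists>q\<in>dom_f T1 T2 \<tau>. sg T1 T2 \<tau> q = s \<and> norm (p - q) = \<bar>sg T1 T2 \<tau> p - s\<bar>"
proof -
  have s0: "0 < s" using s r_pos[OF tau] by linarith
  obtain p1 p2 where pp: "p = (p1, p2)" by (cases p)
  have St1D: "St1 T1 T2 \<tau> \<subseteq> dom_f T1 T2 \<tau>" "St2 T1 T2 \<tau> \<subseteq> dom_f T1 T2 \<tau>" "Sta T1 T2 \<tau> \<subseteq> dom_f T1 T2 \<tau>"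
    unfolding dom_f_def by auto
  have A: "\<exists>q\<in>dom_f T1 T2 \<tau>. sg T1 T2 \<tau> q = s \<and> norm (p - q) = \<bar>(XX - p1) - s\<bar>" if "YY < p2"
  proof (intro bexI conjI)
    show "(XX - s, p2) \<in> dom_f T1 T2 \<tau>" using in_St1[OF s that] St1D by auto
    show "sg T1 T2 \<tau> (XX - s, p2) = s" using sg_a[OF tau, where p="(XX - s, p2)"] s0 that by simp
    show "norm (p - (XX - s, p2)) = \<bar>(XX - p1) - s\<bar>" by (simp add: pp abs_minus_commute)
  qed
  have B: "\<exists>q\<in>dom_f T1 T2 \<tau>. sg T1 T2 \<tau> q = s \<and> norm (p - q) = \<bar>(YY - p2) - s\<bar>" if "XX < p1"
  proof (intro bexI conjI)
    show "(p1, YY - s) \<in> dom_f T1 T2 \<tau>" using in_St2[OF s that] St1D by auto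
    show "sg T1 T2 \<tau> (p1, YY - s) = s" using sg_b[OF tau, where p="(p1, YY - s)"] s0 that by simp
    show "norm (p - (p1, YY - s)) = \<bar>(YY - p2) - s\<bar>" by (simp add: pp abs_minus_commute)
  qed
  from dom_cases[OF p] consider "p1 < XX" "YY < p2" | "XX < p1" "p2 < YY" |
     "p1 \<le> XX" "p2 \<le> YY" "p \<noteq> c0 T1 T2 \<tau>" | "XX < p1" "YY < p2" unfolding pp by auto
  then show ?thesis
  proof cases
    case 1
    then have "sg T1 T2 \<tau> p = XX - p1" using sg_a[OF tau, where p=p] pp by simp
    then show ?thesis using A 1 by simp
  next
    case 2
    then have "sg T1 T2 \<tau> p = YY - p2" using sg_b[OF tau, where p=p] pp by simp
    then show ?thesis using B 2 by simp
  next
    case 3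
    define c where "c = c0 T1 T2 \<tau>"
    define \<rho> where "\<rho> = norm (p - c)"
    have rho: "0 < \<rho>" using 3 by (simp add: \<rho>_def c_def)
    have sgp: "sg T1 T2 \<tau> p = \<rho>" using sg_c[OF tau, where p=p] 3 pp by (simp add: \<rho>_def c_def)
    define q where "q = c + (s / \<rho>) *\<^sub>R (p - c)"
    have k: "0 \<le> s / \<rho>" using s0 rho by simp
    have "fst q = XX + (s/\<rho>) * (p1 - XX)" unfolding q_def c_def pp by simp
    moreover have "(s/\<rho>) * (p1 - XX) \<le> 0" using k 3 by (intro mult_nonneg_nonpos) auto
    ultimately have q1: "fst q \<le> XX" by linarith
    have "snd q = YY + (s/\<rho>) * (p2 - YY)" unfolding q_def c_def pp by simp
    moreover have "(s/\<rho>) * (p2 - YY) \<le> 0" using k 3 by (intro mult_nonneg_nonpos) auto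
    ultimately have q2: "snd q \<le> YY" by linarith
    have nq: "norm (q - c) = s" unfolding q_def using rho s0 by (simp add: \<rho>_def)
    have "q \<in> Sta T1 T2 \<tau>" using q1 q2 nq s unfolding Sta_def c_def by (auto simp: R2_eq[OF tau] c0_eq[OF tau])
    moreover have "sg T1 T2 \<tau> q = s" using sg_c[OF tau q1 q2] nq c_def by simp
    moreover have "norm (p - q) = \<bar>\<rho> - s\<bar>"
    proof -
      have "p - q = (1 - s / \<rho>) *\<^sub>R (p - c)" unfolding q_def by (simp add: algebra_simps)
      then have "norm (p - q) = \<bar>1 - s / \<rho>\<bar> * \<rho>" by (simp add: \<rho>_def)
      also have "\<dots> = \<bar>(1 - s / \<rho>) * \<rho>\<bar>" using rho by (simp add: abs_mult)
      also have "(1 - s / \<rho>) * \<rho> = \<rho> - s" using rho by (simp add: field_simps)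
      finally show ?thesis .
    qed
    ultimately show ?thesis using St1D sgp by blast
  next
    case 4
    then have sgp: "sg T1 T2 \<tau> p = max (XX - p1) (YY - p2)" using sg_d[OF tau, where p=p] pp by simp
    show ?thesis
    proof (cases "YY - p2 \<le> XX - p1")
      case True then show ?thesis using A 4 sgp by (simp add: max_def)
    next
      case False then show ?thesis using B 4 sgp by (simp add: max_def)
    qed
  qed
qed

end


context
  fixes r t :: real
  assumes r: "0 < r" and t: "0 < t"
begin

lemma hh_witness: "\<exists>s. (s = r \<or> s = r + t) \<and> s \<noteq> v \<and> \<bar>hh r t v - hh r t s\<bar> = ph r t v * \<bar>v - s\<bar>"
proof (cases "r + t/2 \<le> v")
  case True
  have h1: "hh r t r = 1" using hh_lo[OF r t] by simp
  have "\<bar>hh r t v - 1\<bar> = ph r t v * \<bar>v - r\<bar>"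
  proof (cases "r + t \<le> v")
    case True
    then show ?thesis using hh_hi[OF r t, of v] t by (simp add: ph_def)
  next
    case False
    then have "hh r t v = (r + t - v) / t" using hh_mid[OF r t, of v] \<open>r + t/2 \<le> v\<close> t by simp
    moreover have "\<bar>(r + t - v) / t - 1\<bar> = (v - r) / t" using \<open>r + t/2 \<le> v\<close> t
      by (simp add: abs_if field_simps)
    ultimately show ?thesis using False \<open>r + t/2 \<le> v\<close> t by (simp add: ph_def)
  qed
  then show ?thesis using h1 True t by (intro exI[of _ r]) auto
next
  case False
  have h1: "hh r t (r + t) = 0" using hh_hi[OF r t] by simp
  have "\<bar>hh r t v\<bar> = ph r t v * \<bar>v - (r + t)\<bar>"
  proof (cases "v < r")
    case True
    then show ?thesis using hh_lo[OF r t, of v] t by (simp add: ph_def)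
  next
    case False
    then have "hh r t v = (r + t - v) / t" using hh_mid[OF r t, of v] \<open>\<not> r + t/2 \<le> v\<close> t by simp
    moreover have "0 \<le> (r + t - v) / t" using \<open>\<not> r + t/2 \<le> v\<close> t by simp
    ultimately show ?thesis using False \<open>\<not> r + t/2 \<le> v\<close> t by (simp add: ph_def)
  qed
  then show ?thesis using h1 False t by (intro exI[of _ "r + t"]) auto
qed

lemma ph_cl: "ph r t (cl r t v) = 1 / t"
  using t by (auto simp: ph_def cl_def)

lemma cl_range: "r \<le> cl r t v" "cl r t v \<le> r + t"
  using t by (auto simp: cl_def)

lemma Ph_hi: "r + t \<le> v \<Longrightarrow> Ph r t g v = max (1 / (v - r)) ((1/t) * exp (- g * (v - (r + t))))"
  using t by (simp add: Ph_def ph_def cl_def)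
lemma Ph_lo: "v < r \<Longrightarrow> Ph r t g v = max (1 / (r + t - v)) ((1/t) * exp (- g * (r - v)))"
  using t by (simp add: Ph_def ph_def cl_def)
lemma Ph_mid: "r \<le> v \<Longrightarrow> v \<le> r + t \<Longrightarrow> Ph r t g v = 1 / t"
  using t by (cases "v = r + t") (simp_all add: Ph_def ph_def cl_def)

end

context
  fixes T1 T2 \<tau> :: real
  assumes tau: "0 < \<tau>"
begin

lemma L_eq:
  assumes w: "w \<in> dom_f T1 T2 \<tau>"
  shows "local_lip (f_tau T1 T2 \<tau>) (dom_f T1 T2 \<tau>) w = ereal (ph (R1 \<tau>) \<tau> (sg T1 T2 \<tau> w))"
proof -
  let ?D = "dom_f T1 T2 \<tau>" and ?f = "f_tau T1 T2 \<tau>"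
  let ?K = "ph (R1 \<tau>) \<tau> (sg T1 T2 \<tau> w)"
  let ?S = "{ereal K | K. \<forall>w'\<in>?D. \<bar>?f w - ?f w'\<bar> \<le> K * norm (w - w')}"
  note rp = r_pos[OF tau]
  have Kp: "0 < ?K" using ph_pos[OF rp tau] by simp
  have "ereal ?K \<in> ?S"
  proof -
    have "\<bar>?f w - ?f w'\<bar> \<le> ?K * norm (w - w')" if "w' \<in> ?D" for w'
    proof -
      have "\<bar>?f w - ?f w'\<bar> = \<bar>hh (R1 \<tau>) \<tau> (sg T1 T2 \<tau> w) - hh (R1 \<tau>) \<tau> (sg T1 T2 \<tau> w')\<bar>"
        using f_eq[OF tau w] f_eq[OF tau that] by simp
      also have "\<dots> \<le> ?K * \<bar>sg T1 T2 \<tau> w - sg T1 T2 \<tau> w'\<bar>" by (rule hh_lip[OF rp tau])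
      also have "\<dots> \<le> ?K * norm (w - w')" using Kp sg_lip[OF tau] by (intro mult_left_mono) auto
      finally show ?thesis .
    qed
    then show ?thesis by blast
  qed
  then have le: "local_lip ?f ?D w \<le> ereal ?K" unfolding local_lip_def by (rule Inf_lower)
  have ge: "ereal ?K \<le> local_lip ?f ?D w" unfolding local_lip_def
  proof (rule Inf_greatest)
    fix x assume "x \<in> ?S"
    then obtain K where x: "x = ereal K" and K: "\<forall>w'\<in>?D. \<bar>?f w - ?f w'\<bar> \<le> K * norm (w - w')" by blast
    obtain s where s: "s = R1 \<tau> \<or> s = R1 \<tau> + \<tau>" "s \<noteq> sg T1 T2 \<tau> w"
      and hs: "\<bar>hh (R1 \<tau>) \<tau> (sg T1 T2 \<tau> w) - hh (R1 \<tau>) \<tau> s\<bar> = ?K * \<bar>sg T1 T2 \<tau> w - s\<bar>"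
      using hh_witness[OF rp tau] by blast
    have sr: "R1 \<tau> \<le> s" "s \<le> R1 \<tau> + \<tau>" using s(1) tau by auto
    obtain q where q: "q \<in> ?D" "sg T1 T2 \<tau> q = s" "norm (w - q) = \<bar>sg T1 T2 \<tau> w - s\<bar>"
      using normal_pt[OF tau w sr] by blast
    have n: "0 < norm (w - q)" using q(3) s(2) by simp
    have "?K * norm (w - q) = \<bar>?f w - ?f q\<bar>"
      using hs q f_eq[OF tau w] f_eq[OF tau q(1)] by simp
    also have "\<dots> \<le> K * norm (w - q)" using K q(1) by blast
    finally have "?K \<le> K" using n by simp
    then show "ereal ?K \<le> x" using x by simp
  qed
  from le ge show ?thesis by (rule antisym)
qed

lemma B_eq:
  assumes g: "0 \<le> \<gamma>" and z: "z \<in> dom_f T1 T2 \<tau>"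
  shows "smooth_sens (f_tau T1 T2 \<tau>) (dom_f T1 T2 \<tau>) (g_E \<gamma>) z = ereal (Ph (R1 \<tau>) \<tau> \<gamma> (sg T1 T2 \<tau> z))"
proof -
  let ?D = "dom_f T1 T2 \<tau>" and ?f = "f_tau T1 T2 \<tau>"
  define F where "F w = ph (R1 \<tau>) \<tau> (sg T1 T2 \<tau> w) / exp (\<gamma> * norm (z - w))" for w
  note rp = r_pos[OF tau]
  have "smooth_sens ?f ?D (g_E \<gamma>) z = (SUP w\<in>?D. ereal (F w))"
    unfolding smooth_sens_def
  proof (rule SUP_cong)
    fix w assume "w \<in> ?D"
    then show "local_lip ?f ?D w / ereal (g_E \<gamma> z w) = ereal (F w)"
      using L_eq[of w] by (simp add: g_E_def F_def)
  qed simp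
  also have "\<dots> = ereal (Ph (R1 \<tau>) \<tau> \<gamma> (sg T1 T2 \<tau> z))"
  proof (rule antisym)
    show "(SUP w\<in>?D. ereal (F w)) \<le> ereal (Ph (R1 \<tau>) \<tau> \<gamma> (sg T1 T2 \<tau> z))"
    proof (rule SUP_least)
      fix w assume w: "w \<in> ?D"
      have p: "0 < ph (R1 \<tau>) \<tau> (sg T1 T2 \<tau> w)" using ph_pos[OF rp tau] by simp
      have "F w = ph (R1 \<tau>) \<tau> (sg T1 T2 \<tau> w) * exp (- \<gamma> * norm (z - w))"
        by (simp add: F_def exp_minus field_simps)
      also have "\<dots> \<le> ph (R1 \<tau>) \<tau> (sg T1 T2 \<tau> w) * exp (- \<gamma> * \<bar>sg T1 T2 \<tau> z - sg T1 T2 \<tau> w\<bar>)"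
        using p g sg_lip[OF tau, where p=z and q=w] by (intro mult_left_mono exp_anti) auto
      also have "\<dots> \<le> Ph (R1 \<tau>) \<tau> \<gamma> (sg T1 T2 \<tau> z)" by (rule Ph_bound[OF rp tau g])
      finally show "ereal (F w) \<le> ereal (Ph (R1 \<tau>) \<tau> \<gamma> (sg T1 T2 \<tau> z))" by simp
    qed
  next
    let ?v = "sg T1 T2 \<tau> z"
    let ?c = "cl (R1 \<tau>) \<tau> ?v"
    have A: "ereal (ph (R1 \<tau>) \<tau> ?v) \<le> (SUP w\<in>?D. ereal (F w))"
    proof -
      have "F z = ph (R1 \<tau>) \<tau> ?v" by (simp add: F_def)
      then show ?thesis using z by (metis SUP_upper)
    qed
    obtain q where q: "q \<in> ?D" "sg T1 T2 \<tau> q = ?c" "norm (z - q) = \<bar>?v - ?c\<bar>"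
      using normal_pt[OF tau z cl_range[OF rp tau]] by blast
    have B: "ereal (exp (- \<gamma> * \<bar>?v - ?c\<bar>) / \<tau>) \<le> (SUP w\<in>?D. ereal (F w))"
    proof -
      have "F q = exp (- \<gamma> * \<bar>?v - ?c\<bar>) / \<tau>"
        using q ph_cl[OF rp tau] by (simp add: F_def exp_minus field_simps)
      then show ?thesis using q(1) by (metis SUP_upper)
    qed
    show "ereal (Ph (R1 \<tau>) \<tau> \<gamma> ?v) \<le> (SUP w\<in>?D. ereal (F w))"
      unfolding Ph_def using A B by (simp add: max_def)
  qed
  finally show ?thesis .
qed

end


context
  fixes T1 T2 \<tau> :: real
  assumes tau: "0 < \<tau>"
begin

lemma sgv1: "fst z < T1 + \<tau>/2 + R1 \<tau> \<Longrightarrow> T2 + \<tau>/2 + R1 \<tau> \<le> snd z \<Longrightarrow> sg T1 T2 \<tau> z = T1 + \<tau>/2 + R1 \<tau> - fst z"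
  using sg_a[OF tau, where p=z] by (simp add: c0_eq[OF tau])
lemma sgv2: "snd z < T2 + \<tau>/2 + R1 \<tau> \<Longrightarrow> T1 + \<tau>/2 + R1 \<tau> \<le> fst z \<Longrightarrow> sg T1 T2 \<tau> z = T2 + \<tau>/2 + R1 \<tau> - snd z"
  using sg_b[OF tau, where p=z] by (simp add: c0_eq[OF tau])
lemma sgv3: "fst z \<le> T1 + \<tau>/2 + R1 \<tau> \<Longrightarrow> snd z \<le> T2 + \<tau>/2 + R1 \<tau> \<Longrightarrow> sg T1 T2 \<tau> z = norm (z - c0 T1 T2 \<tau>)"
  using sg_c[OF tau, where p=z] by (simp add: c0_eq[OF tau])
lemma sgv4: "T1 + \<tau>/2 + R1 \<tau> \<le> fst z \<Longrightarrow> T2 + \<tau>/2 + R1 \<tau> \<le> snd z \<Longrightarrow>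
    sg T1 T2 \<tau> z = max (T1 + \<tau>/2 + R1 \<tau> - fst z) (T2 + \<tau>/2 + R1 \<tau> - snd z)"
  using sg_d[OF tau, where p=z] by (simp add: c0_eq[OF tau])

end

theorem mainTheorem10:
  fixes T1 T2 \<tau> \<gamma> :: real
  assumes "T1 > 0" and "T2 > 0" and "0 < \<tau>" and "\<tau> < 2 * min T1 T2" and "\<gamma> > 0"
  defines "B \<equiv> smooth_sens (f_tau T1 T2 \<tau>) (dom_f T1 T2 \<tau>) (g_E \<gamma>)"
  shows
   "(\<forall>z \<in> S01 T1 T2 \<tau>. B z = ereal (max (1 / (T1 + \<tau>/2 - fst z))
        ((1/\<tau>) * exp (- \<gamma> * (T1 - \<tau>/2 - fst z))))) \<and>
    (\<forall>z \<in> S02 T1 T2 \<tau>. B z = ereal (max (1 / (T2 + \<tau>/2 - snd z))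
        ((1/\<tau>) * exp (- \<gamma> * (T2 - \<tau>/2 - snd z))))) \<and>
    (\<forall>z \<in> S0a T1 T2 \<tau>. B z = ereal (max (1 / (norm (z - c0 T1 T2 \<tau>) - R1 \<tau>))
        ((1/\<tau>) * exp (- \<gamma> * (norm (z - c0 T1 T2 \<tau>) - R2 \<tau>))))) \<and>
    (\<forall>z \<in> S11 T1 T2 \<tau>. B z = ereal (max (1 / (fst z - (T1 - \<tau>/2)))
        ((1/\<tau>) * exp (- \<gamma> * (fst z - (T1 + \<tau>/2)))))) \<and>
    (\<forall>z \<in> S12 T1 T2 \<tau>. B z = ereal (max (1 / (snd z - (T2 - \<tau>/2)))
        ((1/\<tau>) * exp (- \<gamma> * (snd z - (T2 + \<tau>/2)))))) \<and>
    (\<forall>z \<in> S13 T1 T2 \<tau>. B z = ereal (max (1 / (fst z - (T1 - \<tau>/2)))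
        (max ((1/\<tau>) * exp (- \<gamma> * (fst z - (T1 + \<tau>/2))))
        (max (1 / (snd z - (T2 - \<tau>/2)))
             ((1/\<tau>) * exp (- \<gamma> * (snd z - (T2 + \<tau>/2)))))))) \<and>
    (\<forall>z \<in> S1a T1 T2 \<tau>. B z = ereal (max (1 / (R2 \<tau> - norm (z - c0 T1 T2 \<tau>)))
        ((1/\<tau>) * exp (- \<gamma> * (R1 \<tau> - norm (z - c0 T1 T2 \<tau>)))))) \<and>
    (\<forall>z \<in> St1 T1 T2 \<tau> \<union> St2 T1 T2 \<tau> \<union> Sta T1 T2 \<tau>. B z = ereal (1/\<tau>))"
proof -
  have tau: "0 < \<tau>" using assms by simp
  note rp = r_pos[OF tau]
  have Bz: "B z = ereal (Ph (R1 \<tau>) \<tau> \<gamma> (sg T1 T2 \<tau> z))" if "z \<in> dom_f T1 T2 \<tau>" for z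
    unfolding B_def using B_eq[OF tau _ that] assms by simp
  note Phhi = Ph_hi[OF rp tau] and Phlo = Ph_lo[OF rp tau] and Phmid = Ph_mid[OF rp tau]
  note R2 = R2_eq[OF tau]
  show ?thesis
  proof (intro conjI ballI)
    fix z assume z: "z \<in> S01 T1 T2 \<tau>"
    then have zd: "z \<in> dom_f T1 T2 \<tau>" unfolding dom_f_def by blast
    have v: "sg T1 T2 \<tau> z = T1 + \<tau>/2 + R1 \<tau> - fst z" using z rp tau by (intro sgv1[OF tau]) (auto simp: S01_def)
    have h: "R1 \<tau> + \<tau> \<le> sg T1 T2 \<tau> z" using sg_S01[OF tau z] .
    have e1: "T1 + \<tau>/2 + R1 \<tau> - fst z - R1 \<tau> = T1 + \<tau>/2 - fst z" by simp
    have e2: "T1 + \<tau>/2 + R1 \<tau> - fst z - (R1 \<tau> + \<tau>) = T1 - \<tau>/2 - fst z" by simp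
    show "B z = ereal (max (1 / (T1 + \<tau>/2 - fst z)) ((1/\<tau>) * exp (- \<gamma> * (T1 - \<tau>/2 - fst z))))"
      using Bz[OF zd] Phhi[OF h] unfolding v e1 e2 by simp
  next
    fix z assume z: "z \<in> S02 T1 T2 \<tau>"
    then have zd: "z \<in> dom_f T1 T2 \<tau>" unfolding dom_f_def by blast
    have v: "sg T1 T2 \<tau> z = T2 + \<tau>/2 + R1 \<tau> - snd z" using z rp tau by (intro sgv2[OF tau]) (auto simp: S02_def)
    have h: "R1 \<tau> + \<tau> \<le> sg T1 T2 \<tau> z" using sg_S02[OF tau z] .
    have e1: "T2 + \<tau>/2 + R1 \<tau> - snd z - R1 \<tau> = T2 + \<tau>/2 - snd z" by simp
    have e2: "T2 + \<tau>/2 + R1 \<tau> - snd z - (R1 \<tau> + \<tau>) = T2 - \<tau>/2 - snd z" by simp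
    show "B z = ereal (max (1 / (T2 + \<tau>/2 - snd z)) ((1/\<tau>) * exp (- \<gamma> * (T2 - \<tau>/2 - snd z))))"
      using Bz[OF zd] Phhi[OF h] unfolding v e1 e2 by simp
  next
    fix z assume z: "z \<in> S0a T1 T2 \<tau>"
    then have zd: "z \<in> dom_f T1 T2 \<tau>" unfolding dom_f_def by blast
    have v: "sg T1 T2 \<tau> z = norm (z - c0 T1 T2 \<tau>)" using z by (intro sgv3[OF tau]) (auto simp: S0a_def)
    have h: "R1 \<tau> + \<tau> \<le> sg T1 T2 \<tau> z" using sg_S0a[OF tau z] by simp
    show "B z = ereal (max (1 / (norm (z - c0 T1 T2 \<tau>) - R1 \<tau>))
        ((1/\<tau>) * exp (- \<gamma> * (norm (z - c0 T1 T2 \<tau>) - R2 \<tau>))))"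
      using Bz[OF zd] Phhi[OF h] unfolding v R2 by simp
  next
    fix z assume z: "z \<in> S11 T1 T2 \<tau>"
    then have zd: "z \<in> dom_f T1 T2 \<tau>" unfolding dom_f_def by blast
    have v: "sg T1 T2 \<tau> z = T1 + \<tau>/2 + R1 \<tau> - fst z" using z by (intro sgv1[OF tau]) (auto simp: S11_def)
    have h: "sg T1 T2 \<tau> z < R1 \<tau>" using sg_S11[OF tau z] .
    have e1: "R1 \<tau> + \<tau> - (T1 + \<tau>/2 + R1 \<tau> - fst z) = fst z - (T1 - \<tau>/2)" by simp
    have e2: "R1 \<tau> - (T1 + \<tau>/2 + R1 \<tau> - fst z) = fst z - (T1 + \<tau>/2)" by simp
    show "B z = ereal (max (1 / (fst z - (T1 - \<tau>/2)))
        ((1/\<tau>) * exp (- \<gamma> * (fst z - (T1 + \<tau>/2)))))"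
      using Bz[OF zd] Phlo[OF h] unfolding v e1 e2 by simp
  next
    fix z assume z: "z \<in> S12 T1 T2 \<tau>"
    then have zd: "z \<in> dom_f T1 T2 \<tau>" unfolding dom_f_def by blast
    have v: "sg T1 T2 \<tau> z = T2 + \<tau>/2 + R1 \<tau> - snd z" using z by (intro sgv2[OF tau]) (auto simp: S12_def)
    have h: "sg T1 T2 \<tau> z < R1 \<tau>" using sg_S12[OF tau z] .
    have e1: "R1 \<tau> + \<tau> - (T2 + \<tau>/2 + R1 \<tau> - snd z) = snd z - (T2 - \<tau>/2)" by simp
    have e2: "R1 \<tau> - (T2 + \<tau>/2 + R1 \<tau> - snd z) = snd z - (T2 + \<tau>/2)" by simp
    show "B z = ereal (max (1 / (snd z - (T2 - \<tau>/2)))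
        ((1/\<tau>) * exp (- \<gamma> * (snd z - (T2 + \<tau>/2)))))"
      using Bz[OF zd] Phlo[OF h] unfolding v e1 e2 by simp
  next
    fix z assume z: "z \<in> S13 T1 T2 \<tau>"
    then have zd: "z \<in> dom_f T1 T2 \<tau>" unfolding dom_f_def by blast
    have zz: "T1 + \<tau>/2 + R1 \<tau> < fst z" "T2 + \<tau>/2 + R1 \<tau> < snd z" using z by (auto simp: S13_def)
    have v: "sg T1 T2 \<tau> z = max (T1 + \<tau>/2 + R1 \<tau> - fst z) (T2 + \<tau>/2 + R1 \<tau> - snd z)"
      using zz by (intro sgv4[OF tau]) auto
    have h: "sg T1 T2 \<tau> z < R1 \<tau>" using sg_S13[OF tau z] .
    define a1 where "a1 = fst z - (T1 - \<tau>/2)"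
    define a2 where "a2 = snd z - (T2 - \<tau>/2)"
    define b1 where "b1 = fst z - (T1 + \<tau>/2)"
    define b2 where "b2 = snd z - (T2 + \<tau>/2)"
    have pos: "0 < a1" "0 < a2" using zz rp tau by (auto simp: a1_def a2_def)
    have P: "Ph (R1 \<tau>) \<tau> \<gamma> (sg T1 T2 \<tau> z) = max (1 / min a1 a2) ((1/\<tau>) * exp (- \<gamma> * min b1 b2))"
    proof -
      have e1: "R1 \<tau> + \<tau> - sg T1 T2 \<tau> z = min a1 a2" unfolding v a1_def a2_def by (simp add: min_def max_def)
      have e2: "R1 \<tau> - sg T1 T2 \<tau> z = min b1 b2" unfolding v b1_def b2_def by (simp add: min_def max_def)
      show ?thesis using Phlo[OF h] unfolding e1 e2 .
    qed
    have ab: "a1 - b1 = a2 - b2" by (simp add: a1_def a2_def b1_def b2_def)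
    have g0: "0 \<le> \<gamma>" using assms by simp
    show "B z = ereal (max (1 / (fst z - (T1 - \<tau>/2)))
        (max ((1/\<tau>) * exp (- \<gamma> * (fst z - (T1 + \<tau>/2))))
        (max (1 / (snd z - (T2 - \<tau>/2)))
             ((1/\<tau>) * exp (- \<gamma> * (snd z - (T2 + \<tau>/2)))))))"
    proof (cases "a1 \<le> a2")
      case True
      then have m: "min a1 a2 = a1" "min b1 b2 = b1" using ab by (auto simp: min_def)
      have A: "1 / a2 \<le> 1 / a1" using True pos by (simp add: divide_simps)
      have "exp (- \<gamma> * b2) \<le> exp (- \<gamma> * b1)" using True ab g0 by (intro exp_anti[OF rp tau]) auto
      then have E: "(1/\<tau>) * exp (- \<gamma> * b2) \<le> (1/\<tau>) * exp (- \<gamma> * b1)" using tau by (intro mult_left_mono) auto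
      have "max (1 / a1) (max ((1/\<tau>) * exp (- \<gamma> * b1)) (max (1 / a2) ((1/\<tau>) * exp (- \<gamma> * b2))))
          = max (1 / a1) ((1/\<tau>) * exp (- \<gamma> * b1))" using A E by (simp add: max_def)
      then show ?thesis using Bz[OF zd] P m
        unfolding a1_def[symmetric] a2_def[symmetric] b1_def[symmetric] b2_def[symmetric]
        by simp
    next
      case False
      then have m: "min a1 a2 = a2" "min b1 b2 = b2" using ab by (auto simp: min_def)
      have A: "1 / a1 \<le> 1 / a2" using False pos by (simp add: divide_simps)
      have "exp (- \<gamma> * b1) \<le> exp (- \<gamma> * b2)" using False ab g0 by (intro exp_anti[OF rp tau]) auto
      then have E: "(1/\<tau>) * exp (- \<gamma> * b1) \<le> (1/\<tau>) * exp (- \<gamma> * b2)" using tau by (intro mult_left_mono) auto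
      have "max (1 / a1) (max ((1/\<tau>) * exp (- \<gamma> * b1)) (max (1 / a2) ((1/\<tau>) * exp (- \<gamma> * b2))))
          = max (1 / a2) ((1/\<tau>) * exp (- \<gamma> * b2))" using A E by (simp add: max_def)
      then show ?thesis using Bz[OF zd] P m
        unfolding a1_def[symmetric] a2_def[symmetric] b1_def[symmetric] b2_def[symmetric]
        by simp
    qed
  next
    fix z assume z: "z \<in> S1a T1 T2 \<tau>"
    then have zd: "z \<in> dom_f T1 T2 \<tau>" unfolding dom_f_def by blast
    have v: "sg T1 T2 \<tau> z = norm (z - c0 T1 T2 \<tau>)" using z by (intro sgv3[OF tau]) (auto simp: S1a_def)
    have h: "sg T1 T2 \<tau> z < R1 \<tau>" using sg_S1a[OF tau z] .
    show "B z = ereal (max (1 / (R2 \<tau> - norm (z - c0 T1 T2 \<tau>)))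
        ((1/\<tau>) * exp (- \<gamma> * (R1 \<tau> - norm (z - c0 T1 T2 \<tau>)))))"
      using Bz[OF zd] Phlo[OF h] unfolding v R2 by (simp add: algebra_simps)
  next
    fix z assume z: "z \<in> St1 T1 T2 \<tau> \<union> St2 T1 T2 \<tau> \<union> Sta T1 T2 \<tau>"
    then have zd: "z \<in> dom_f T1 T2 \<tau>" unfolding dom_f_def by blast
    have "R1 \<tau> \<le> sg T1 T2 \<tau> z \<and> sg T1 T2 \<tau> z \<le> R1 \<tau> + \<tau>"
      using z sg_St1[OF tau, where p=z] sg_St2[OF tau, where p=z] sg_Sta[OF tau, where p=z] by blast
    then show "B z = ereal (1/\<tau>)" using Bz[OF zd] Phmid by simp
  qed
qed


end
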